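(* Let $\{Q_\theta,\ \theta\in I\}$ be a natural exponential family as in the context and let $\overline\Theta$ be a class of functions from a set ${\mathscr W}$ to $I$ which is VC-subgraph with dimension not larger than $V\ge1$. Then the class of functions $\{(w,y)\mapsto q_{\theta(w)}(y):\ \theta\in\overline\Theta\}$ on ${\mathscr W}\times\mathscr Y$ is VC-subgraph with dimension not larger than $9.41V$.
   Context: $\nu$ is a $\sigma$-finite measure on $(\mathscr Y,\mathcal Y)$, $S:\mathscr Y\to\mathbb R$ measurable and not $\nu$-a.e. constant, $I$ an interval with nonempty interior on which $A(\theta)=\log\int e^{\theta S(y)}d\nu(y)$ is finite, and $q_\theta(y)=e^{S(y)\theta-A(\theta)}$. A class of real functions on a set $E$ is VC-subgraph with dimension not larger than $V$ if its subgraphs $\{(x,t)\in E\times\mathbb R: f(x)>t\}$ shatter no subset of $E\times\mathbb R$ of cardinality larger than $V$. *)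

theory Defs
  imports "HOL-Analysis.Analysis"
begin

definition subgraph :: "'a set \<Rightarrow> ('a \<Rightarrow> real) \<Rightarrow> ('a \<times> real) set" where
  "subgraph E f = {(x, t). x \<in> E \<and> f x > t}"

definition subgraphs_shatter :: "'a set \<Rightarrow> ('a \<Rightarrow> real) set \<Rightarrow> ('a \<times> real) set \<Rightarrow> bool" where
  "subgraphs_shatter E F C \<longleftrightarrow> (\<forall>D \<subseteq> C. \<exists>f\<in>F. subgraph E f \<inter> C = D)"

definition vc_subgraph_le :: "'a set \<Rightarrow> ('a \<Rightarrow> real) set \<Rightarrow> real \<Rightarrow> bool" where
  "vc_subgraph_le E F V \<longleftrightarrow>
     (\<forall>C \<subseteq> E \<times> UNIV. subgraphs_shatter E F C \<longrightarrow> finite C \<and> real (card C) \<le> V)"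

definition logpart :: "'y measure \<Rightarrow> ('y \<Rightarrow> real) \<Rightarrow> real \<Rightarrow> real" where
  "logpart \<nu> S \<theta> = ln (enn2real (\<integral>\<^sup>+ y. ennreal (exp (\<theta> * S y)) \<partial>\<nu>))"

definition nef_density :: "'y measure \<Rightarrow> ('y \<Rightarrow> real) \<Rightarrow> real \<Rightarrow> 'y \<Rightarrow> real" where
  "nef_density \<nu> S \<theta> y = exp (S y * \<theta> - logpart \<nu> S \<theta>)"

end

theory Submission
  imports Defs
begin



definition shat :: "'a set set \<Rightarrow> 'a set \<Rightarrow> bool" where
  "shat F S \<longleftrightarrow> (\<forall>D\<subseteq>S. \<exists>A\<in>F. A \<inter> S = D)"

lemma pajor:
  assumes "finite P"
  shows "F \<subseteq> Pow P \<Longrightarrow> card F \<le> card {S. S \<subseteq> P \<and> shat F S}"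
  using assms
proof (induction P arbitrary: F rule: finite_induct)
  case empty
  then have "F \<subseteq> {{}}" by auto
  show ?case
  proof (cases "F = {}")
    case True then show ?thesis by simp
  next
    case False
    then have "F = {{}}" using \<open>F \<subseteq> {{}}\<close> by auto
    moreover have "{S. S = {} \<and> shat {{}} S} = {{}}" by (auto simp: shat_def)
    ultimately have "{S. S \<subseteq> {} \<and> shat F S} = {{}}" by simp
    then show ?thesis using \<open>F = {{}}\<close> by simp
  qed
next
  case (insert x P)
  define F0 where "F0 = (\<lambda>A. A - {x}) ` F"
  define F1 where "F1 = {B. B \<subseteq> P \<and> B \<in> F \<and> insert x B \<in> F}"
  define Fa where "Fa = {A\<in>F. x \<notin> A}"
  define Fb where "Fb = {A\<in>F. x \<in> A}"
  define Fb' where "Fb' = (\<lambda>A. A - {x}) ` Fb"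
  have finF: "finite F" using insert.prems insert.hyps(1)
    by (meson finite_Pow_iff finite_insert rev_finite_subset)
  have F0P: "F0 \<subseteq> Pow P" using insert.prems by (auto simp: F0_def)
  have F1P: "F1 \<subseteq> Pow P" by (auto simp: F1_def)
  have finF0: "finite F0" using finF by (simp add: F0_def)
  have "F = Fa \<union> Fb" "Fa \<inter> Fb = {}" by (auto simp: Fa_def Fb_def)
  have finFa: "finite Fa" "finite Fb" using finF by (auto simp: Fa_def Fb_def)
  have "inj_on (\<lambda>A. A - {x}) Fb"
  proof (rule inj_onI)
    fix A1 A2 assume A: "A1 \<in> Fb" "A2 \<in> Fb" "A1 - {x} = A2 - {x}"
    then have "x \<in> A1" "x \<in> A2" by (simp_all add: Fb_def)
    then have "A1 = insert x (A1 - {x})" "A2 = insert x (A2 - {x})" by (simp_all add: insert_absorb)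
    then show "A1 = A2" using A(3) by metis
  qed
  then have cFb: "card Fb' = card Fb" by (simp add: Fb'_def card_image)
  have "card F = card Fa + card Fb"
    using \<open>F = Fa \<union> Fb\<close> \<open>Fa \<inter> Fb = {}\<close> finFa card_Un_disjoint by metis
  also have "\<dots> = card Fa + card Fb'" using cFb by simp
  also have "\<dots> = card (Fa \<union> Fb') + card (Fa \<inter> Fb')"
    by (rule card_Un_Int) (use finFa in \<open>simp_all add: Fb'_def\<close>)
  also have "\<dots> \<le> card F0 + card F1"
  proof (rule add_mono)
    show "card (Fa \<union> Fb') \<le> card F0"
      by (rule card_mono[OF finF0]) (auto simp: Fa_def Fb'_def Fb_def F0_def)
    have "Fa \<inter> Fb' \<subseteq> F1"
    proof
      fix B assume B: "B \<in> Fa \<inter> Fb'"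
      then obtain A where A: "A \<in> F" "x \<in> A" "B = A - {x}" by (auto simp: Fb'_def Fb_def)
      have "insert x B = A" using A by auto
      moreover have "B \<subseteq> P" using A insert.prems by auto
      ultimately show "B \<in> F1" using B A by (auto simp: F1_def Fa_def)
    qed
    moreover have "finite F1" using F1P insert.hyps(1) by (meson finite_Pow_iff rev_finite_subset)
    ultimately show "card (Fa \<inter> Fb') \<le> card F1" by (rule card_mono[rotated])
  qed
  also have "\<dots> \<le> card {S. S \<subseteq> P \<and> shat F0 S} + card {S. S \<subseteq> P \<and> shat F1 S}"
    using insert.IH[OF F0P] insert.IH[OF F1P] by simp
  also have "\<dots> = card {S. S \<subseteq> P \<and> shat F0 S} + card (insert x ` {S. S \<subseteq> P \<and> shat F1 S})"
  proof -
    have "inj_on (insert x) {S. S \<subseteq> P \<and> shat F1 S}"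
    proof (rule inj_onI)
      fix S1 S2 assume S: "S1 \<in> {S. S \<subseteq> P \<and> shat F1 S}" "S2 \<in> {S. S \<subseteq> P \<and> shat F1 S}"
        "insert x S1 = insert x S2"
      then have "x \<notin> S1" "x \<notin> S2" using insert.hyps(2) by auto
      then show "S1 = S2" using S(3) insert_ident by metis
    qed
    then show ?thesis by (simp add: card_image)
  qed
  also have "\<dots> = card ({S. S \<subseteq> P \<and> shat F0 S} \<union> insert x ` {S. S \<subseteq> P \<and> shat F1 S})"
    by (rule card_Un_disjoint[symmetric]) (use insert.hyps in auto)
  also have "\<dots> \<le> card {S. S \<subseteq> insert x P \<and> shat F S}"
  proof (rule card_mono)
    show "finite {S. S \<subseteq> insert x P \<and> shat F S}" using insert.hyps by simp
    show "{S. S \<subseteq> P \<and> shat F0 S} \<union> insert x ` {S. S \<subseteq> P \<and> shat F1 S}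
        \<subseteq> {S. S \<subseteq> insert x P \<and> shat F S}"
    proof
      fix T assume "T \<in> {S. S \<subseteq> P \<and> shat F0 S} \<union> insert x ` {S. S \<subseteq> P \<and> shat F1 S}"
      then consider "T \<in> {S. S \<subseteq> P \<and> shat F0 S}" | "T \<in> insert x ` {S. S \<subseteq> P \<and> shat F1 S}"
        by (rule UnE)
      then consider "T \<subseteq> P" "shat F0 T" | S where "T = insert x S" "S \<subseteq> P" "shat F1 S"
      proof cases
        case 1 then have "T \<subseteq> P" "shat F0 T" by simp_all
        then show ?thesis by (rule that(1))
      next
        case 2
        then obtain S where "S \<in> {S. S \<subseteq> P \<and> shat F1 S}" "T = insert x S" by (rule imageE)
        then have "T = insert x S" "S \<subseteq> P" "shat F1 S" by simp_all
        then show ?thesis by (rule that(2))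
      qed
      then show "T \<in> {S. S \<subseteq> insert x P \<and> shat F S}"
      proof cases
        case 1
        have "shat F T" unfolding shat_def
        proof (intro allI impI)
          fix D assume "D \<subseteq> T"
          then have "\<exists>A\<in>F0. A \<inter> T = D" using 1(2) unfolding shat_def by blast
          then obtain A where "A \<in> F0" "A \<inter> T = D" by blast
          then obtain A' where A': "A' \<in> F" "A = A' - {x}" unfolding F0_def by blast
          have "x \<notin> T" using 1(1) insert.hyps(2) by blast
          then have "A' \<inter> T = A \<inter> T" using A'(2) by blast
          then show "\<exists>A\<in>F. A \<inter> T = D" using \<open>A \<inter> T = D\<close> A'(1) by blast
        qed
        then show ?thesis using 1(1) by blast
      next
        case 2
        have xS: "x \<notin> S" using 2(2) insert.hyps(2) by blast
        have "shat F T" unfolding shat_def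
        proof (intro allI impI)
          fix D assume D: "D \<subseteq> T"
          then have "D - {x} \<subseteq> S" using 2(1) by blast
          then have "\<exists>B\<in>F1. B \<inter> S = D - {x}" using 2(3) unfolding shat_def by blast
          then obtain B where B: "B \<in> F1" "B \<inter> S = D - {x}" by blast
          then have BF: "B \<in> F" "insert x B \<in> F" "x \<notin> B" using insert.hyps(2) unfolding F1_def by blast+
          show "\<exists>A\<in>F. A \<inter> T = D"
          proof (cases "x \<in> D")
            case True
            then have "insert x B \<inter> T = D" using B(2) 2(1) D xS by blast
            then show ?thesis using BF by blast
          next
            case False
            then have "B \<inter> T = D" using B(2) 2(1) D BF(3) by blast
            then show ?thesis using BF by blast
          qed
        qed
        moreover have "T \<subseteq> insert x P" using 2(1,2) by blast
        ultimately show ?thesis by blast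
      qed
    qed
  qed
  finally show ?case .
qed



lemma count_small_subsets:
  assumes "finite P"
  shows "card {S. S \<subseteq> P \<and> card S \<le> V} \<le> (\<Sum>k\<le>V. card P choose k)"
proof -
  have "{S. S \<subseteq> P \<and> card S \<le> V} = (\<Union>k\<in>{..V}. {S. S \<subseteq> P \<and> card S = k})" by auto
  then have "card {S. S \<subseteq> P \<and> card S \<le> V} \<le> (\<Sum>k\<le>V. card {S. S \<subseteq> P \<and> card S = k})"
    by (simp add: card_UN_le)
  also have "\<dots> = (\<Sum>k\<le>V. card P choose k)" using n_subsets[OF assms] by simp
  finally show ?thesis .
qed

lemma pow_aux: "(k::nat) \<ge> 9 \<Longrightarrow> 6 * (real k + 1) \<le> 2 ^ k"
proof (induction k rule: dec_induct)
  case base then show ?case by simp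
next
  case (step k) then show ?case by simp
qed

lemma powr_big: assumes "(x::real) \<ge> 9" shows "2 * exp 1 * x < 2 powr x"
proof -
  define k where "k = nat \<lfloor>x\<rfloor>"
  have k9: "k \<ge> 9" using assms by (simp add: k_def le_nat_floor)
  have kx: "real k \<le> x" "x < real k + 1" using assms by (auto simp: k_def)
  have "2 * exp 1 * x \<le> 6 * x" using exp_le assms by simp
  also have "\<dots> < 6 * (real k + 1)" using kx by simp
  also have "\<dots> \<le> 2 ^ k" using pow_aux[OF k9] .
  also have "\<dots> = 2 powr real k" by (simp add: powr_realpow)
  also have "\<dots> \<le> 2 powr x" using kx by simp
  finally show ?thesis .
qed

lemma sum_binom_bound:
  assumes "V \<ge> 1" "V \<le> m"
  shows "real (\<Sum>k\<le>V. m choose k) \<le> (exp 1 * real m / real V) ^ V"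
proof -
  define p where "p = real V / real m"
  have p: "0 < p" "p \<le> 1" using assms by (auto simp: p_def)
  have "real (\<Sum>k\<le>V. m choose k) * p ^ V = (\<Sum>k\<le>V. real (m choose k) * p ^ V)"
    by (simp add: sum_distrib_right)
  also have "\<dots> \<le> (\<Sum>k\<le>V. real (m choose k) * p ^ k)"
    by (rule sum_mono) (use p in \<open>auto intro!: mult_left_mono power_decreasing\<close>)
  also have "\<dots> \<le> (\<Sum>k\<le>m. real (m choose k) * p ^ k)"
    by (rule sum_mono2) (use assms p in auto)
  also have "\<dots> = (p + 1) ^ m" by (simp add: binomial_ring)
  also have "\<dots> \<le> exp p ^ m"
    by (rule power_mono) (use p in \<open>auto simp: add.commute\<close>)
  also have "\<dots> = exp 1 ^ V" using assms
    by (simp add: p_def flip: exp_of_nat_mult)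
  finally have "real (\<Sum>k\<le>V. m choose k) \<le> exp 1 ^ V / p ^ V"
    using p by (simp add: pos_le_divide_eq)
  also have "\<dots> = (exp 1 * real m / real V) ^ V"
    by (simp add: p_def power_divide field_simps)
  finally show ?thesis .
qed

lemma numeric:
  assumes "V \<ge> 1" "real n > 9.41 * real V"
  shows "(\<Sum>k\<le>V. (2*n) choose k) < 2 ^ n"
proof -
  define x where "x = real n / real V"
  have Vpos: "real V > 0" using assms by simp
  have x9: "x \<ge> 9" using assms Vpos by (simp add: x_def field_simps)
  have "real V \<le> 9.41 * real V" by simp
  then have "real V < real n" using assms by linarith
  then have "V \<le> 2 * n" by simp
  have "real (\<Sum>k\<le>V. (2*n) choose k) \<le> (exp 1 * real (2*n) / real V) ^ V"
    by (rule sum_binom_bound) fact+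
  also have "\<dots> = (2 * exp 1 * x) ^ V" by (simp add: x_def mult.commute mult.left_commute)
  also have "\<dots> < (2 powr x) ^ V"
    by (rule power_strict_mono) (use powr_big[OF x9] x9 assms in auto)
  also have "\<dots> = 2 powr (x * real V)" by (simp add: powr_powr[symmetric] powr_realpow[symmetric])
  also have "\<dots> = 2 ^ n" using Vpos by (simp add: x_def powr_realpow)
  finally show ?thesis by (metis of_nat_less_imp_less of_nat_numeral of_nat_power)
qed



lemma finite_interval_encode:
  fixes X J :: "real set"
  assumes "finite X" and conv: "\<And>x1 x x2. x1 \<le> x \<Longrightarrow> x \<le> x2 \<Longrightarrow> x1 \<in> J \<Longrightarrow> x2 \<in> J \<Longrightarrow> x \<in> J"
  shows "\<exists>a b. \<forall>x\<in>X. x \<in> J \<longleftrightarrow> a < x \<and> x \<le> b"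
proof (cases "X \<inter> J = {}")
  case True
  then show ?thesis by (intro exI[of _ 0]) auto
next
  case False
  define Y where "Y = X \<inter> J"
  have fY: "finite Y" "Y \<noteq> {}" using False assms(1) by (auto simp: Y_def)
  define L where "L = {x\<in>X. x < Min Y}"
  have fL: "finite L" using assms(1) by (simp add: L_def)
  define a where "a = (if L = {} then Min Y - 1 else Max L)"
  have aY: "a < Min Y"
    using fL Max_in[OF fL] by (auto simp: a_def L_def)
  have "\<forall>x\<in>X. x \<in> J \<longleftrightarrow> a < x \<and> x \<le> Max Y"
  proof
    fix x assume xX: "x \<in> X"
    show "x \<in> J \<longleftrightarrow> a < x \<and> x \<le> Max Y"
    proof
      assume "x \<in> J"
      then have "x \<in> Y" using xX by (simp add: Y_def)
      then have "Min Y \<le> x" "x \<le> Max Y" using fY by auto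
      then show "a < x \<and> x \<le> Max Y" using aY by simp
    next
      assume ax: "a < x \<and> x \<le> Max Y"
      have "\<not> x < Min Y"
      proof
        assume "x < Min Y"
        then have "x \<in> L" using xX by (simp add: L_def)
        then have "x \<le> a" using fL by (auto simp: a_def)
        then show False using ax by simp
      qed
      then have "Min Y \<le> x" by simp
      moreover have "Min Y \<in> J" "Max Y \<in> J" using Min_in[OF fY] Max_in[OF fY] by (auto simp: Y_def)
      ultimately show "x \<in> J" using conv[of "Min Y" x "Max Y"] ax by simp
    qed
  qed
  then show ?thesis by blast
qed

lemma key:
  fixes C :: "'c set" and wf :: "'c \<Rightarrow> 'w" and J :: "'c \<Rightarrow> real set"
    and \<Theta> :: "('w \<Rightarrow> real) set"
  assumes vc: "vc_subgraph_le W \<Theta> (real V)"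
    and fC: "finite C"
    and wf: "\<And>c. c \<in> C \<Longrightarrow> wf c \<in> W"
    and conv: "\<And>c x1 x x2. c \<in> C \<Longrightarrow> x1 \<le> x \<Longrightarrow> x \<le> x2 \<Longrightarrow> x1 \<in> J c \<Longrightarrow> x2 \<in> J c \<Longrightarrow> x \<in> J c"
    and sh: "\<And>D. D \<subseteq> C \<Longrightarrow> \<exists>\<theta>\<in>\<Theta>. \<forall>c\<in>C. (c \<in> D \<longleftrightarrow> \<theta> (wf c) \<in> J c)"
  shows "2 ^ card C \<le> (\<Sum>k\<le>V. (2 * card C) choose k)"
proof -
  define th where "th D = (SOME \<theta>. \<theta> \<in> \<Theta> \<and> (\<forall>c\<in>C. (c \<in> D \<longleftrightarrow> \<theta> (wf c) \<in> J c)))" for D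
  have th: "th D \<in> \<Theta> \<and> (\<forall>c\<in>C. (c \<in> D \<longleftrightarrow> th D (wf c) \<in> J c))" if "D \<subseteq> C" for D
  proof -
    have "\<exists>\<theta>. \<theta> \<in> \<Theta> \<and> (\<forall>c\<in>C. (c \<in> D \<longleftrightarrow> \<theta> (wf c) \<in> J c))" using sh[OF that] by blast
    then show ?thesis unfolding th_def by (rule someI_ex)
  qed
  define X where "X = (\<lambda>(D, c). th D (wf c)) ` (Pow C \<times> C)"
  have fX: "finite X" using fC by (simp add: X_def)
  define ab where "ab c = (SOME p. \<forall>x\<in>X. x \<in> J c \<longleftrightarrow> fst p < x \<and> x \<le> snd p)" for c
  define a where "a c = fst (ab c)" for c
  define b where "b c = snd (ab c)" for c
  have ab: "x \<in> J c \<longleftrightarrow> a c < x \<and> x \<le> b c" if "c \<in> C" "x \<in> X" for c x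
  proof -
    have "\<exists>a b. \<forall>x\<in>X. x \<in> J c \<longleftrightarrow> a < x \<and> x \<le> b"
      by (rule finite_interval_encode[OF fX]) (rule conv[OF that(1)])
    then obtain a0 b0 where "\<forall>x\<in>X. x \<in> J c \<longleftrightarrow> a0 < x \<and> x \<le> b0" by blast
    then have "\<exists>p. \<forall>x\<in>X. x \<in> J c \<longleftrightarrow> fst p < x \<and> x \<le> snd p"
      by (intro exI[of _ "(a0, b0)"]) simp
    then have "\<forall>x\<in>X. x \<in> J c \<longleftrightarrow> a c < x \<and> x \<le> b c"
      unfolding a_def b_def ab_def by (rule someI_ex)
    then show ?thesis using that(2) by blast
  qed
  define P where "P = (\<lambda>c. (wf c, a c)) ` C \<union> (\<lambda>c. (wf c, b c)) ` C"
  have fP: "finite P" using fC by (simp add: P_def)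
  have cP: "card P \<le> 2 * card C"
  proof -
    have "card P \<le> card ((\<lambda>c. (wf c, a c)) ` C) + card ((\<lambda>c. (wf c, b c)) ` C)"
      unfolding P_def by (rule card_Un_le)
    also have "\<dots> \<le> card C + card C" by (intro add_mono card_image_le fC)
    finally show ?thesis by simp
  qed
  have PW: "P \<subseteq> W \<times> UNIV" using wf by (auto simp: P_def)
  define F where "F = (\<lambda>D. subgraph W (th D) \<inter> P) ` Pow C"
  have enc: "c \<in> D \<longleftrightarrow> (wf c, a c) \<in> subgraph W (th D) \<inter> P \<and> (wf c, b c) \<notin> subgraph W (th D) \<inter> P"
    if "D \<subseteq> C" "c \<in> C" for D c
  proof -
    have "th D (wf c) \<in> X" unfolding X_def
      by (rule image_eqI[where x="(D, c)"]) (use that in auto)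
    then have 1: "th D (wf c) \<in> J c \<longleftrightarrow> a c < th D (wf c) \<and> th D (wf c) \<le> b c"
      by (rule ab[OF that(2)])
    have 2: "c \<in> D \<longleftrightarrow> th D (wf c) \<in> J c" using th[OF that(1)] that(2) by blast
    have Pa: "(wf c, a c) \<in> P" unfolding P_def using that(2) by blast
    have Pb: "(wf c, b c) \<in> P" unfolding P_def using that(2) by blast
    have wc: "wf c \<in> W" using wf[OF that(2)] .
    show ?thesis unfolding 2 1 using Pa Pb wc by (simp add: subgraph_def not_less)
  qed
  have "inj_on (\<lambda>D. subgraph W (th D) \<inter> P) (Pow C)"
  proof (rule inj_onI)
    fix D1 D2 assume D: "D1 \<in> Pow C" "D2 \<in> Pow C"
      "subgraph W (th D1) \<inter> P = subgraph W (th D2) \<inter> P"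
    show "D1 = D2"
    proof (rule set_eqI)
      fix c show "c \<in> D1 \<longleftrightarrow> c \<in> D2"
      proof (cases "c \<in> C")
        case True
        have "D1 \<subseteq> C" "D2 \<subseteq> C" using D(1,2) by simp_all
        then show ?thesis using enc[of D1 c, OF _ True] enc[of D2 c, OF _ True] unfolding D(3) by simp
      next
        case False then show ?thesis using D(1,2) by blast
      qed
    qed
  qed
  then have "card F = card (Pow C)" unfolding F_def by (rule card_image)
  then have "2 ^ card C = card F" using fC by (simp add: card_Pow)
  also have "\<dots> \<le> card {S. S \<subseteq> P \<and> shat F S}"
    by (rule pajor[OF fP]) (unfold F_def, blast)
  also have "\<dots> \<le> card {S. S \<subseteq> P \<and> card S \<le> V}"
  proof (rule card_mono)
    show "finite {S. S \<subseteq> P \<and> card S \<le> V}" using fP by simp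
    show "{S. S \<subseteq> P \<and> shat F S} \<subseteq> {S. S \<subseteq> P \<and> card S \<le> V}"
    proof (rule subsetI)
      fix S assume "S \<in> {S. S \<subseteq> P \<and> shat F S}"
      then have S: "S \<subseteq> P" "shat F S" by simp_all
      have "subgraphs_shatter W \<Theta> S"
        unfolding subgraphs_shatter_def
      proof (intro allI impI)
        fix D assume "D \<subseteq> S"
        then have "\<exists>A\<in>F. A \<inter> S = D" using S(2) unfolding shat_def by blast
        then obtain A where "A \<in> F" "A \<inter> S = D" by blast
        then obtain E where "E \<subseteq> C" "A = subgraph W (th E) \<inter> P" unfolding F_def by blast
        have "P \<inter> S = S" using S(1) by (rule Int_absorb1)
        then have "subgraph W (th E) \<inter> S = A \<inter> S" using \<open>A = subgraph W (th E) \<inter> P\<close>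
          by (simp add: Int_assoc)
        then have "subgraph W (th E) \<inter> S = D" using \<open>A \<inter> S = D\<close> by simp
        moreover have "th E \<in> \<Theta>" using th[OF \<open>E \<subseteq> C\<close>] by simp
        ultimately show "\<exists>f\<in>\<Theta>. subgraph W f \<inter> S = D" by blast
      qed
      moreover have "S \<subseteq> W \<times> UNIV" using S(1) PW by (rule order_trans)
      ultimately have "real (card S) \<le> real V"
        using vc unfolding vc_subgraph_le_def by simp
      then have "card S \<le> V" by simp
      then show "S \<in> {S. S \<subseteq> P \<and> card S \<le> V}" using S(1) by simp
    qed
  qed
  also have "\<dots> \<le> (\<Sum>k\<le>V. card P choose k)" by (rule count_small_subsets[OF fP])
  also have "\<dots> \<le> (\<Sum>k\<le>V. (2 * card C) choose k)"
    by (rule sum_mono, rule binomial_right_mono, rule cP)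
  finally show ?thesis .
qed



lemma Z_pos:
  assumes S: "S \<in> borel_measurable \<nu>" and nc: "\<not> (\<exists>c. AE y in \<nu>. S y = c)"
  shows "(\<integral>\<^sup>+ z. ennreal (exp (s * S z)) \<partial>\<nu>) \<noteq> 0"
proof
  have [measurable]: "S \<in> borel_measurable \<nu>" by (rule S)
  assume "(\<integral>\<^sup>+ z. ennreal (exp (s * S z)) \<partial>\<nu>) = 0"
  moreover have "(\<lambda>z. ennreal (exp (s * S z))) \<in> borel_measurable \<nu>" by measurable
  ultimately have "AE z in \<nu>. ennreal (exp (s * S z)) = 0" by (simp add: nn_integral_0_iff_AE)
  then have "AE z in \<nu>. S z = 0" by (rule eventually_mono) simp
  then show False using nc by blast
qed

lemma H_eq:
  assumes S: "S \<in> borel_measurable \<nu>"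
  shows "(\<integral>\<^sup>+ z. ennreal (exp (s * (S z - c))) \<partial>\<nu>)
       = (\<integral>\<^sup>+ z. ennreal (exp (s * S z)) \<partial>\<nu>) * ennreal (exp (- s * c))"
proof -
  have [measurable]: "S \<in> borel_measurable \<nu>" by (rule S)
  have pw: "ennreal (exp (s * (S z - c))) = ennreal (exp (s * S z)) * ennreal (exp (- s * c))" for z
  proof -
    have "exp (s * (S z - c)) = exp (s * S z) * exp (- s * c)"
      by (simp add: exp_add[symmetric] algebra_simps)
    then show ?thesis by (simp add: ennreal_mult)
  qed
  have "(\<integral>\<^sup>+ z. ennreal (exp (s * (S z - c))) \<partial>\<nu>)
      = (\<integral>\<^sup>+ z. ennreal (exp (s * S z)) * ennreal (exp (- s * c)) \<partial>\<nu>)" by (simp only: pw)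
  also have "\<dots> = (\<integral>\<^sup>+ z. ennreal (exp (s * S z)) \<partial>\<nu>) * ennreal (exp (- s * c))"
    by (rule nn_integral_multc) measurable
  finally show ?thesis .
qed

lemma H_convex:
  assumes S: "S \<in> borel_measurable \<nu>" and l: "0 \<le> l" "l \<le> 1"
  shows "(\<integral>\<^sup>+ z. ennreal (exp (((1 - l) * s1 + l * s2) * (S z - c))) \<partial>\<nu>)
     \<le> ennreal (1 - l) * (\<integral>\<^sup>+ z. ennreal (exp (s1 * (S z - c))) \<partial>\<nu>)
       + ennreal l * (\<integral>\<^sup>+ z. ennreal (exp (s2 * (S z - c))) \<partial>\<nu>)"
proof -
  have [measurable]: "S \<in> borel_measurable \<nu>" by (rule S)
  have pw: "ennreal (exp (((1 - l) * s1 + l * s2) * (S z - c)))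
     \<le> ennreal (1 - l) * ennreal (exp (s1 * (S z - c))) + ennreal l * ennreal (exp (s2 * (S z - c)))" for z
  proof -
    have "exp ((1 - l) *\<^sub>R (s1 * (S z - c)) + l *\<^sub>R (s2 * (S z - c)))
        \<le> (1 - l) * exp (s1 * (S z - c)) + l * exp (s2 * (S z - c))"
      by (rule convex_onD[OF exp_convex]) (use l in simp_all)
    moreover have "((1 - l) * s1 + l * s2) * (S z - c) = (1 - l) *\<^sub>R (s1 * (S z - c)) + l *\<^sub>R (s2 * (S z - c))"
      by (simp add: algebra_simps)
    ultimately have "exp (((1 - l) * s1 + l * s2) * (S z - c)) \<le> (1 - l) * exp (s1 * (S z - c)) + l * exp (s2 * (S z - c))"
      by (simp only:)
    then have "ennreal (exp (((1 - l) * s1 + l * s2) * (S z - c))) \<le> ennreal ((1 - l) * exp (s1 * (S z - c)) + l * exp (s2 * (S z - c)))"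
      by (rule ennreal_leI)
    also have "ennreal ((1 - l) * exp (s1 * (S z - c)) + l * exp (s2 * (S z - c)))
       = ennreal ((1 - l) * exp (s1 * (S z - c))) + ennreal (l * exp (s2 * (S z - c)))"
      by (rule ennreal_plus) (use l in simp_all)
    also have "ennreal ((1 - l) * exp (s1 * (S z - c))) = ennreal (1 - l) * ennreal (exp (s1 * (S z - c)))"
      by (rule ennreal_mult) (use l in simp_all)
    also have "ennreal (l * exp (s2 * (S z - c))) = ennreal l * ennreal (exp (s2 * (S z - c)))"
      by (rule ennreal_mult) (use l in simp_all)
    finally show ?thesis .
  qed
  have "(\<integral>\<^sup>+ z. ennreal (exp (((1 - l) * s1 + l * s2) * (S z - c))) \<partial>\<nu>)
     \<le> (\<integral>\<^sup>+ z. ennreal (1 - l) * ennreal (exp (s1 * (S z - c))) + ennreal l * ennreal (exp (s2 * (S z - c))) \<partial>\<nu>)"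
    by (rule nn_integral_mono) (rule pw)
  also have "\<dots> = (\<integral>\<^sup>+ z. ennreal (1 - l) * ennreal (exp (s1 * (S z - c))) \<partial>\<nu>) + (\<integral>\<^sup>+ z. ennreal l * ennreal (exp (s2 * (S z - c))) \<partial>\<nu>)"
    by (rule nn_integral_add) measurable
  also have "(\<integral>\<^sup>+ z. ennreal (1 - l) * ennreal (exp (s1 * (S z - c))) \<partial>\<nu>) = ennreal (1 - l) * (\<integral>\<^sup>+ z. ennreal (exp (s1 * (S z - c))) \<partial>\<nu>)"
    by (rule nn_integral_cmult) measurable
  also have "(\<integral>\<^sup>+ z. ennreal l * ennreal (exp (s2 * (S z - c))) \<partial>\<nu>) = ennreal l * (\<integral>\<^sup>+ z. ennreal (exp (s2 * (S z - c))) \<partial>\<nu>)"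
    by (rule nn_integral_cmult) measurable
  finally show ?thesis .
qed

lemma dens_gt:
  assumes S: "S \<in> borel_measurable \<nu>" and nc: "\<not> (\<exists>c. AE y in \<nu>. S y = c)"
    and fin: "(\<integral>\<^sup>+ z. ennreal (exp (s * S z)) \<partial>\<nu>) < \<infinity>" and t: "t > 0"
  shows "t < nef_density \<nu> S s y \<longleftrightarrow>
    enn2real (\<integral>\<^sup>+ z. ennreal (exp (s * (S z - S y))) \<partial>\<nu>) < 1 / t"
proof -
  define Z where "Z = (\<integral>\<^sup>+ z. ennreal (exp (s * S z)) \<partial>\<nu>)"
  define Zr where "Zr = enn2real Z"
  define E where "E = exp (s * S y)"
  have Zpos: "Zr > 0" unfolding Zr_def enn2real_positive_iff
    using Z_pos[OF S nc, of s] fin by (simp add: Z_def zero_less_iff_neq_zero)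
  have Epos: "E > 0" by (simp add: E_def)
  have "enn2real (\<integral>\<^sup>+ z. ennreal (exp (s * (S z - S y))) \<partial>\<nu>) = enn2real (Z * ennreal (exp (- s * S y)))"
    unfolding Z_def by (simp only: H_eq[OF S])
  also have "\<dots> = Zr * exp (- s * S y)" by (simp add: enn2real_mult Zr_def)
  also have "exp (- s * S y) = 1 / E" by (simp add: E_def exp_minus divide_inverse)
  finally have h: "enn2real (\<integral>\<^sup>+ z. ennreal (exp (s * (S z - S y))) \<partial>\<nu>) = Zr / E" by simp
  have "nef_density \<nu> S s y = exp (S y * s - ln Zr)"
    by (simp add: nef_density_def logpart_def Zr_def Z_def)
  also have "\<dots> = E / Zr" using Zpos by (simp add: exp_diff E_def mult.commute)
  finally have d: "nef_density \<nu> S s y = E / Zr" .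
  show ?thesis unfolding h d using Zpos Epos t by (simp add: field_simps)
qed

lemma J_conv:
  assumes S: "S \<in> borel_measurable \<nu>" and nc: "\<not> (\<exists>c. AE y in \<nu>. S y = c)"
    and I: "is_interval I"
    and fin: "\<forall>\<theta>\<in>I. (\<integral>\<^sup>+ y. ennreal (exp (\<theta> * S y)) \<partial>\<nu>) < \<infinity>"
    and x: "x1 \<le> x" "x \<le> x2" "x1 \<in> {s\<in>I. t < nef_density \<nu> S s y}" "x2 \<in> {s\<in>I. t < nef_density \<nu> S s y}"
  shows "x \<in> {s\<in>I. t < nef_density \<nu> S s y}"
proof -
  have xI: "x \<in> I" using I x unfolding is_interval_1 by blast
  show ?thesis
  proof (cases "t > 0")
    case False
    have "0 < nef_density \<nu> S x y" by (simp add: nef_density_def)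
    then show ?thesis using False xI by simp
  next
    case t: True
    define H where "H s = (\<integral>\<^sup>+ z. ennreal (exp (s * (S z - S y))) \<partial>\<nu>)" for s
    have Hfin: "H s < \<infinity>" if "s \<in> I" for s
    proof -
      have "H s = (\<integral>\<^sup>+ z. ennreal (exp (s * S z)) \<partial>\<nu>) * ennreal (exp (- s * S y))"
        unfolding H_def by (rule H_eq[OF S])
      moreover have "(\<integral>\<^sup>+ z. ennreal (exp (s * S z)) \<partial>\<nu>) < \<infinity>" using fin that by blast
      ultimately show ?thesis by (simp add: ennreal_mult_less_top)
    qed
    have iff: "t < nef_density \<nu> S s y \<longleftrightarrow> enn2real (H s) < 1 / t" if "s \<in> I" for s
      unfolding H_def by (rule dens_gt[OF S nc _ t]) (use fin that in blast)
    have x1I: "x1 \<in> I" and x2I: "x2 \<in> I" using x by auto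
    have h1: "enn2real (H x1) < 1 / t" using iff[OF x1I] x(3) by simp
    have h2: "enn2real (H x2) < 1 / t" using iff[OF x2I] x(4) by simp
    show ?thesis
    proof (cases "x1 = x2")
      case True
      then have "x = x1" using x by simp
      then show ?thesis using x by simp
    next
      case False
      then have lt: "x1 < x2" using x by simp
      define l where "l = (x - x1) / (x2 - x1)"
      have l: "0 \<le> l" "l \<le> 1" using lt x by (auto simp: l_def field_simps)
      have lx: "l * (x2 - x1) = x - x1" using lt by (simp add: l_def)
      have "(1 - l) * x1 + l * x2 = x1 + l * (x2 - x1)" by (simp add: algebra_simps)
      then have xeq: "x = (1 - l) * x1 + l * x2" using lx by simp
      define a where "a = enn2real (H x1)"
      define b where "b = enn2real (H x2)"
      have Ha: "H x1 = ennreal a" using Hfin[OF x1I] by (simp add: a_def)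
      have Hb: "H x2 = ennreal b" using Hfin[OF x2I] by (simp add: b_def)
      have "H x \<le> ennreal (1 - l) * H x1 + ennreal l * H x2"
        unfolding xeq H_def by (rule H_convex[OF S l])
      also have "\<dots> = ennreal ((1 - l) * a + l * b)"
        unfolding Ha Hb using l by (simp add: ennreal_plus ennreal_mult a_def b_def)
      finally have "enn2real (H x) \<le> (1 - l) * a + l * b"
        by (rule enn2real_leI[rotated]) (use l in \<open>simp add: a_def b_def\<close>)
      also have "\<dots> \<le> (1 - l) * max a b + l * max a b"
        by (intro add_mono mult_left_mono) (use l in auto)
      also have "\<dots> = max a b" by (simp add: algebra_simps)
      also have "\<dots> < 1 / t" using h1 h2 by (simp add: a_def b_def)
      finally show ?thesis using iff[OF xI] xI by simp
    qed
  qed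
qed



lemma shatter_subset:
  assumes "subgraphs_shatter E F C" "B \<subseteq> C"
  shows "subgraphs_shatter E F B"
  unfolding subgraphs_shatter_def
proof (intro allI impI)
  fix D assume "D \<subseteq> B"
  then have "D \<subseteq> C" using assms(2) by blast
  then obtain f where "f \<in> F" "subgraph E f \<inter> C = D" using assms(1) unfolding subgraphs_shatter_def by blast
  then have "subgraph E f \<inter> B = D" using \<open>D \<subseteq> B\<close> assms(2) by blast
  then show "\<exists>f\<in>F. subgraph E f \<inter> B = D" using \<open>f \<in> F\<close> by blast
qed

lemma finite_case:
  fixes \<nu> :: "'y measure" and S :: "'y \<Rightarrow> real" and I :: "real set"
    and W :: "'w set" and \<Theta> :: "('w \<Rightarrow> real) set" and V :: nat
  assumes S: "S \<in> borel_measurable \<nu>"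
    and nc: "\<not> (\<exists>c. AE y in \<nu>. S y = c)"
    and I: "is_interval I"
    and fin: "\<forall>\<theta>\<in>I. (\<integral>\<^sup>+ y. ennreal (exp (\<theta> * S y)) \<partial>\<nu>) < \<infinity>"
    and TI: "\<forall>\<theta>\<in>\<Theta>. \<forall>w\<in>W. \<theta> w \<in> I"
    and vc: "vc_subgraph_le W \<Theta> (real V)"
    and V: "V \<ge> 1"
    and fC: "finite C" and CE: "C \<subseteq> (W \<times> space \<nu>) \<times> UNIV"
    and sh: "subgraphs_shatter (W \<times> space \<nu>) ((\<lambda>\<theta>. \<lambda>(w, y). nef_density \<nu> S (\<theta> w) y) ` \<Theta>) C"
  shows "real (card C) \<le> 9.41 * real V"
proof -
  define wf :: "(('w \<times> 'y) \<times> real) \<Rightarrow> 'w" where "wf c = fst (fst c)" for c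
  define J :: "(('w \<times> 'y) \<times> real) \<Rightarrow> real set" where "J c = {s\<in>I. snd c < nef_density \<nu> S s (snd (fst c))}" for c
  have "2 ^ card C \<le> (\<Sum>k\<le>V. (2 * card C) choose k)"
  proof (rule key[OF vc fC])
    fix c assume "c \<in> C"
    then show "wf c \<in> W" using CE by (auto simp: wf_def)
  next
    fix c x1 x x2 assume a: "c \<in> C" "x1 \<le> x" "x \<le> x2" "x1 \<in> J c" "x2 \<in> J c"
    show "x \<in> J c" unfolding J_def
      by (rule J_conv[OF S nc I fin a(2) a(3) a(4)[unfolded J_def] a(5)[unfolded J_def]])
  next
    fix D assume "D \<subseteq> C"
    moreover have "\<forall>D\<subseteq>C. \<exists>f\<in>(\<lambda>\<theta>. \<lambda>(w, y). nef_density \<nu> S (\<theta> w) y) ` \<Theta>. subgraph (W \<times> space \<nu>) f \<inter> C = D"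
      using sh unfolding subgraphs_shatter_def .
    ultimately have "\<exists>f\<in>(\<lambda>\<theta>. \<lambda>(w, y). nef_density \<nu> S (\<theta> w) y) ` \<Theta>. subgraph (W \<times> space \<nu>) f \<inter> C = D"
      by blast
    then obtain f where f: "f \<in> (\<lambda>\<theta>. \<lambda>(w, y). nef_density \<nu> S (\<theta> w) y) ` \<Theta>"
      "subgraph (W \<times> space \<nu>) f \<inter> C = D" by blast
    then obtain \<theta> where th: "\<theta> \<in> \<Theta>" "f = (\<lambda>(w, y). nef_density \<nu> S (\<theta> w) y)" by blast
    have "\<forall>c\<in>C. (c \<in> D \<longleftrightarrow> \<theta> (wf c) \<in> J c)"
    proof
      fix c assume cC: "c \<in> C"
      obtain w y t where c: "c = ((w, y), t)" by (metis prod.collapse)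
      have wy: "w \<in> W" "y \<in> space \<nu>" using cC CE c by auto
      have "c \<in> D \<longleftrightarrow> c \<in> subgraph (W \<times> space \<nu>) f" using f(2) cC by blast
      also have "\<dots> \<longleftrightarrow> t < nef_density \<nu> S (\<theta> w) y" using wy by (simp add: c th(2) subgraph_def)
      also have "\<dots> \<longleftrightarrow> \<theta> (wf c) \<in> J c" using TI th(1) wy by (simp add: J_def wf_def c)
      finally show "c \<in> D \<longleftrightarrow> \<theta> (wf c) \<in> J c" .
    qed
    then show "\<exists>\<theta>\<in>\<Theta>. \<forall>c\<in>C. (c \<in> D \<longleftrightarrow> \<theta> (wf c) \<in> J c)" using th(1) by blast
  qed
  show ?thesis
  proof (rule ccontr)
    assume "\<not> ?thesis"
    then have "real (card C) > 9.41 * real V" by simp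
    from numeric[OF V this] have "(\<Sum>k\<le>V. (2 * card C) choose k) < 2 ^ card C" .
    then show False using \<open>2 ^ card C \<le> _\<close> by simp
  qed
qed

theorem proposition6:
  fixes \<nu> :: "'y measure" and S :: "'y \<Rightarrow> real" and I :: "real set"
    and W :: "'w set" and \<Theta> :: "('w \<Rightarrow> real) set" and V :: nat
  assumes "sigma_finite_measure \<nu>"
    and "S \<in> borel_measurable \<nu>"
    and "\<not> (\<exists>c. AE y in \<nu>. S y = c)"
    and "is_interval I" and "interior I \<noteq> {}"
    and "\<forall>\<theta>\<in>I. (\<integral>\<^sup>+ y. ennreal (exp (\<theta> * S y)) \<partial>\<nu>) < \<infinity>"
    and "\<forall>\<theta>\<in>\<Theta>. \<forall>w\<in>W. \<theta> w \<in> I"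
    and "vc_subgraph_le W \<Theta> (real V)"
    and "V \<ge> 1"
  shows "vc_subgraph_le (W \<times> space \<nu>)
           ((\<lambda>\<theta>. \<lambda>(w, y). nef_density \<nu> S (\<theta> w) y) ` \<Theta>) (9.41 * real V)"
  unfolding vc_subgraph_le_def
proof (intro allI impI)
  fix C assume CE: "C \<subseteq> (W \<times> space \<nu>) \<times> UNIV"
    and sh: "subgraphs_shatter (W \<times> space \<nu>) ((\<lambda>\<theta>. \<lambda>(w, y). nef_density \<nu> S (\<theta> w) y) ` \<Theta>) C"
  have fC: "finite C"
  proof (rule ccontr)
    assume "infinite C"
    then obtain B where B: "finite B" "card B = nat \<lceil>9.41 * real V\<rceil> + 1" "B \<subseteq> C"
      using infinite_arbitrarily_large by blast
    have "real (card B) \<le> 9.41 * real V"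
      by (rule finite_case[OF assms(2,3,4,6,7,8,9) B(1)])
        (use B(3) CE shatter_subset[OF sh B(3)] in auto)
    moreover have "real (card B) > 9.41 * real V" using B(2)
      by (simp add: of_nat_add) linarith
    ultimately show False by simp
  qed
  show "finite C \<and> real (card C) \<le> 9.41 * real V"
    using fC finite_case[OF assms(2,3,4,6,7,8,9) fC CE sh] by simp
qed

end
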